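(* Let $X=\{a_1,\dots,a_\ell\}$ be a finite set of $\ell$ distinct points and $N\ge2$. A probability measure $\gamma$ on $X^N$ is a symmetrized Monge state, i.e. $\gamma=S\big(\sum_{\nu=1}^\ell\frac1\ell\delta_{T_1(a_\nu)}\otimes\cdots\otimes\delta_{T_N(a_\nu)}\big)$ for some bijections $T_1,\dots,T_N:X\to X$, if and only if it is an SAE state with uniform marginal $\bar\lambda$ whose site weights all equal $1/\ell$, i.e. $\gamma=\sum_{\nu=1}^\ell\frac1\ell S(\delta_{T_1(a_\nu)}\otimes\cdots\otimes\delta_{T_N(a_\nu)})$ for some (not necessarily bijective) maps $T_1,\dots,T_N:X\to X$ satisfying $\sum_{\nu=1}^\ell\frac1\ell\lambda^{(\nu)}=\bar\lambda$, where $\lambda^{(\nu)}=\frac1N\sum_{k=1}^N\delta_{T_k(a_\nu)}$.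
   Context: $\bar\lambda=\sum_{i=1}^\ell\frac1\ell\delta_{a_i}$ is the uniform probability measure on $X$. The symmetrization operator is $(S\gamma)(A_1\times\cdots\times A_N)=\frac1{N!}\sum_{\sigma\in S_N}\gamma(A_{\sigma(1)}\times\cdots\times A_{\sigma(N)})$. An SAE state with marginal $\lambda_*$ is a probability measure of the form $\sum_{\nu=1}^\ell\alpha^{(\nu)}S(\delta_{T_1(a_\nu)}\otimes\cdots\otimes\delta_{T_N(a_\nu)})$ with maps $T_k:X\to X$ and site weights $\alpha^{(\nu)}\ge0$ such that $\sum_\nu\alpha^{(\nu)}\lambda^{(\nu)}=\lambda_*$, with $\lambda^{(\nu)}$ as in the claim. *)

theory Defs
  imports Complex_Main "HOL-Combinatorics.Permutations"
begin

text \<open>Finitely supported measures on X^N are represented by their weight functions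
  on N-tuples, encoded as lists of length N.\<close>

definition prob_on :: "'a set \<Rightarrow> nat \<Rightarrow> ('a list \<Rightarrow> real) \<Rightarrow> bool" where
  "prob_on X N \<gamma> \<longleftrightarrow> (\<forall>ys. \<gamma> ys \<ge> 0)
     \<and> (\<forall>ys. \<gamma> ys \<noteq> 0 \<longrightarrow> length ys = N \<and> set ys \<subseteq> X)
     \<and> (\<Sum>ys\<in>{ys. length ys = N \<and> set ys \<subseteq> X}. \<gamma> ys) = 1"

definition tdirac :: "'a list \<Rightarrow> 'a list \<Rightarrow> real" where
  "tdirac xs ys = (if ys = xs then 1 else 0)"

definition symm :: "nat \<Rightarrow> ('a list \<Rightarrow> real) \<Rightarrow> 'a list \<Rightarrow> real" where
  "symm N \<gamma> ys = (if length ys = N then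
      (\<Sum>\<sigma>\<in>{\<sigma>. \<sigma> permutes {..<N}}. \<gamma> (map (\<lambda>i. ys ! \<sigma> i) [0..<N])) / fact N
    else 0)"

text \<open>The tuple (T_1(x),...,T_N(x)) (indices 0..N-1).\<close>
definition tup :: "nat \<Rightarrow> (nat \<Rightarrow> 'a \<Rightarrow> 'a) \<Rightarrow> 'a \<Rightarrow> 'a list" where
  "tup N T x = map (\<lambda>k. T k x) [0..<N]"

definition site_marg :: "nat \<Rightarrow> (nat \<Rightarrow> 'a \<Rightarrow> 'a) \<Rightarrow> 'a \<Rightarrow> 'a \<Rightarrow> real" where
  "site_marg N T x y = (\<Sum>k<N. if T k x = y then 1 else 0) / real N"

definition unif :: "'a set \<Rightarrow> 'a \<Rightarrow> real" where
  "unif X y = (if y \<in> X then 1 / real (card X) else 0)"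

definition monge_state :: "'a set \<Rightarrow> nat \<Rightarrow> (nat \<Rightarrow> 'a \<Rightarrow> 'a) \<Rightarrow> 'a list \<Rightarrow> real" where
  "monge_state X N T = symm N (\<lambda>ys. \<Sum>x\<in>X. (1 / real (card X)) * tdirac (tup N T x) ys)"

definition sae_equal_weights :: "'a set \<Rightarrow> nat \<Rightarrow> (nat \<Rightarrow> 'a \<Rightarrow> 'a) \<Rightarrow> 'a list \<Rightarrow> real" where
  "sae_equal_weights X N T = (\<lambda>ys. \<Sum>x\<in>X. (1 / real (card X)) * symm N (tdirac (tup N T x)) ys)"

end

theory Submission
  imports Defs "HOL-Library.Multiset"
begin

lemma size_sum_count: "finite U \<Longrightarrow> set_mset M \<subseteq> U \<Longrightarrow> size M = (\<Sum>y\<in>U. count M y)"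
proof -
  assume U: "finite U" "set_mset M \<subseteq> U"
  have "size M = sum (count M) (set_mset M)" by (rule size_multiset_overloaded_eq)
  also have "\<dots> = sum (count M) U" by (rule sum.mono_neutral_left) (use U in \<open>auto simp: not_in_iff\<close>)
  finally show ?thesis .
qed

lemma hall:
  assumes "finite I" "\<forall>x\<in>I. finite (A x)" "\<forall>S\<subseteq>I. card S \<le> card (\<Union>(A ` S))"
  shows "\<exists>f. inj_on f I \<and> (\<forall>x\<in>I. f x \<in> A x)"
  using assms
proof (induction "card I" arbitrary: I A rule: less_induct)
  case less
  show ?case
  proof (cases "I = {}")
    case True then show ?thesis by auto
  next
    case Ine: False
    show ?thesis
    proof (cases "\<exists>S. S \<subseteq> I \<and> S \<noteq> {} \<and> S \<noteq> I \<and> card (\<Union>(A ` S)) \<le> card S")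
      case True
      then obtain S where S: "S \<subseteq> I" "S \<noteq> {}" "S \<noteq> I" "card (\<Union>(A ` S)) \<le> card S" by blast
      have finS: "finite S" using S(1) less.prems(1) finite_subset by blast
      have cS: "card S < card I" using S less.prems(1) by (meson psubsetI psubset_card_mono)
      have "\<exists>f. inj_on f S \<and> (\<forall>x\<in>S. f x \<in> A x)"
        by (rule less.hyps[OF cS finS]) (use less.prems S(1) in auto)
      then obtain f1 where f1: "inj_on f1 S" "\<forall>x\<in>S. f1 x \<in> A x" by blast
      define U where "U = \<Union>(A ` S)"
      have finU: "finite U" unfolding U_def using finS S(1) less.prems(2) by auto
      have cU: "card U = card S" using S(4) less.prems(3) S(1) unfolding U_def by (simp add: le_antisym)
      have cI: "card (I - S) < card I" using S less.prems(1)
      proof -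
        have "card S > 0" using finS S(2) by (simp add: card_gt_0_iff)
        moreover have "card (I - S) = card I - card S" using S(1) finS by (simp add: card_Diff_subset)
        moreover have "card S \<le> card I" using S(1) less.prems(1) by (simp add: card_mono)
        ultimately show ?thesis by linarith
      qed
      have hall2: "\<forall>T\<subseteq>I - S. card T \<le> card (\<Union>((\<lambda>x. A x - U) ` T))"
      proof (intro allI impI)
        fix T assume T: "T \<subseteq> I - S"
        have finT: "finite T" using T less.prems(1) finite_subset by blast
        have eq: "\<Union>((\<lambda>x. A x - U) ` T) = \<Union>(A ` (T \<union> S)) - U" unfolding U_def by auto
        have sub: "U \<subseteq> \<Union>(A ` (T \<union> S))" unfolding U_def by auto
        have fin2: "finite (\<Union>(A ` (T \<union> S)))" using finT finS T S(1) less.prems(2) by auto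
        have "card (\<Union>((\<lambda>x. A x - U) ` T)) = card (\<Union>(A ` (T \<union> S))) - card U"
          using eq sub fin2 by (simp add: card_Diff_subset finite_subset)
        moreover have "card (T \<union> S) \<le> card (\<Union>(A ` (T \<union> S)))" using less.prems(3) T S(1) by (metis Diff_subset Un_subset_iff subset_trans)
        moreover have "card (T \<union> S) = card T + card S" using T finT finS by (subst card_Un_disjoint) auto
        ultimately show "card T \<le> card (\<Union>((\<lambda>x. A x - U) ` T))" using cU by linarith
      qed
      have "\<exists>f. inj_on f (I - S) \<and> (\<forall>x\<in>I - S. f x \<in> A x - U)"
        by (rule less.hyps[OF cI]) (use less.prems(1,2) hall2 in auto)
      then obtain f2 where f2: "inj_on f2 (I - S)" "\<forall>x\<in>I - S. f2 x \<in> A x - U" by blast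
      define f where "f x = (if x \<in> S then f1 x else f2 x)" for x
      have "inj_on f I"
      proof (rule inj_onI)
        fix x y assume xy: "x \<in> I" "y \<in> I" "f x = f y"
        have inU: "z \<in> S \<Longrightarrow> f1 z \<in> U" for z using f1(2) unfolding U_def by blast
        show "x = y"
        proof (cases "x \<in> S"; cases "y \<in> S")
          assume "x \<in> S" "y \<in> S" then show ?thesis using xy f1(1) unfolding f_def inj_on_def by auto
        next
          assume "x \<in> S" "y \<notin> S" then show ?thesis using xy f2(2) inU[of x] unfolding f_def by auto
        next
          assume a: "x \<notin> S" "y \<in> S"
          then have "f2 x = f1 y" using xy by (simp add: f_def)
          moreover have "f2 x \<notin> U" using f2(2) xy(1) a(1) by blast
          ultimately show ?thesis using inU[OF a(2)] by simp
        next
          assume "x \<notin> S" "y \<notin> S" then show ?thesis using xy f2(1) unfolding f_def inj_on_def by auto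
        qed
      qed
      moreover have "\<forall>x\<in>I. f x \<in> A x" using f1 f2 unfolding f_def by auto
      ultimately show ?thesis by blast
    next
      case False
      then have strict: "\<And>S. S \<subseteq> I \<Longrightarrow> S \<noteq> {} \<Longrightarrow> S \<noteq> I \<Longrightarrow> card S < card (\<Union>(A ` S))"
        by (meson not_le)
      obtain x0 where x0: "x0 \<in> I" using Ine by blast
      have "1 \<le> card (A x0)" proof -
        have "card {x0} \<le> card (\<Union>(A ` {x0}))" using less.prems(3) x0 by blast
        then show ?thesis by simp
      qed
      then obtain a where a: "a \<in> A x0" by fastforce
      have cI: "card (I - {x0}) < card I" using x0 less.prems(1) by (meson card_Diff1_less)
      have hall2: "\<forall>T\<subseteq>I - {x0}. card T \<le> card (\<Union>((\<lambda>x. A x - {a}) ` T))"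
      proof (intro allI impI)
        fix T assume T: "T \<subseteq> I - {x0}"
        show "card T \<le> card (\<Union>((\<lambda>x. A x - {a}) ` T))"
        proof (cases "T = {}")
          case True then show ?thesis by simp
        next
          case False
          have finT: "finite T" using T less.prems(1) finite_subset by blast
          have "card T < card (\<Union>(A ` T))" using strict[of T] T False x0 by auto
          moreover have "\<Union>((\<lambda>x. A x - {a}) ` T) = \<Union>(A ` T) - {a}" by auto
          moreover have "card (\<Union>(A ` T) - {a}) \<ge> card (\<Union>(A ` T)) - 1"
            using finT T less.prems(2) by (cases "a \<in> \<Union>(A ` T)") (auto simp: card_Diff_singleton)
          ultimately show ?thesis by simp
        qed
      qed
      have "\<exists>f. inj_on f (I - {x0}) \<and> (\<forall>x\<in>I - {x0}. f x \<in> A x - {a})"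
        by (rule less.hyps[OF cI]) (use less.prems(1,2) hall2 in auto)
      then obtain f2 where f2: "inj_on f2 (I - {x0})" "\<forall>x\<in>I - {x0}. f2 x \<in> A x - {a}" by blast
      define f where "f = f2(x0 := a)"
      have "inj_on f I"
      proof (rule inj_onI)
        fix x y assume xy: "x \<in> I" "y \<in> I" "f x = f y"
        show "x = y"
        proof (cases "x = x0"; cases "y = x0")
          assume "x \<noteq> x0" "y \<noteq> x0" then show ?thesis using xy f2(1) unfolding f_def inj_on_def by auto
        qed (use xy f2(2) in \<open>auto simp: f_def\<close>)
      qed
      moreover have "\<forall>x\<in>I. f x \<in> A x" using f2 a unfolding f_def by auto
      ultimately show ?thesis by blast
    qed
  qed
qed

lemma decomp:
  fixes M :: "'a \<Rightarrow> 'a multiset"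
  assumes "finite X" "\<forall>x\<in>X. size (M x) = N \<and> set_mset (M x) \<subseteq> X"
    "\<forall>y\<in>X. (\<Sum>x\<in>X. count (M x) y) = N"
  shows "\<exists>L. (\<forall>x\<in>X. mset (L x) = M x) \<and> (\<forall>k<N. bij_betw (\<lambda>x. L x ! k) X X)"
  using assms(2,3)
proof (induction N arbitrary: M)
  case 0
  have "\<forall>x\<in>X. mset [] = M x" using 0 by simp
  then show ?case by (intro exI[of _ "\<lambda>x. []"]) simp
next
  case (Suc N)
  have hc: "\<forall>S\<subseteq>X. card S \<le> card (\<Union>((\<lambda>x. set_mset (M x)) ` S))"
  proof (intro allI impI)
    fix S assume S: "S \<subseteq> X"
    define U where "U = \<Union>((\<lambda>x. set_mset (M x)) ` S)"
    have UX: "U \<subseteq> X" using S Suc.prems(1) unfolding U_def by blast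
    have finU: "finite U" using UX assms(1) finite_subset by blast
    have finS: "finite S" using S assms(1) finite_subset by blast
    have "(\<Sum>x\<in>S. size (M x)) = (\<Sum>x\<in>S. Suc N)"
      by (rule sum.cong[OF refl]) (use Suc.prems(1) S in blast)
    then have "Suc N * card S = (\<Sum>x\<in>S. size (M x))" by simp
    also have "\<dots> = (\<Sum>x\<in>S. \<Sum>y\<in>U. count (M x) y)"
      by (rule sum.cong[OF refl], rule size_sum_count[OF finU]) (auto simp: U_def)
    also have "\<dots> = (\<Sum>y\<in>U. \<Sum>x\<in>S. count (M x) y)" by (rule sum.swap)
    also have "\<dots> \<le> (\<Sum>y\<in>U. \<Sum>x\<in>X. count (M x) y)"
      by (intro sum_mono sum_mono2) (use S assms(1) in auto)
    also have "\<dots> = (\<Sum>y\<in>U. Suc N)" using UX Suc.prems(2) by (intro sum.cong) auto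
    also have "\<dots> = Suc N * card U" by simp
    finally show "card S \<le> card U" by (simp only: Suc_mult_le_cancel1)
  qed
  have finM: "\<forall>x\<in>X. finite (set_mset (M x))" by simp
  obtain g where g: "inj_on g X" "\<forall>x\<in>X. g x \<in># M x"
    using hall[OF assms(1) finM hc] by blast
  have gX: "g ` X \<subseteq> X" using g(2) Suc.prems(1) by (meson image_subsetI subsetD)
  have "g ` X = X"
    by (rule card_subset_eq[OF assms(1) gX]) (use card_image[OF g(1)] in simp)
  then have gbij: "bij_betw g X X" using g(1) unfolding bij_betw_def by simp
  define M' where "M' x = M x - {#g x#}" for x
  have cnt: "count (M' x) y + (if g x = y then 1 else 0) = count (M x) y" if "x \<in> X" for x y
  proof -
    have "count (M x) (g x) > 0" using g(2) that by simp
    then show ?thesis unfolding M'_def by (cases "g x = y") auto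
  qed
  have p1: "\<forall>x\<in>X. size (M' x) = N \<and> set_mset (M' x) \<subseteq> X"
  proof
    fix x assume x: "x \<in> X"
    have "size (M' x) = N" using Suc.prems(1) x g(2) unfolding M'_def by (simp add: size_Diff_singleton)
    moreover have "set_mset (M' x) \<subseteq> X" using Suc.prems(1) x unfolding M'_def
      by (meson in_diffD subset_iff)
    ultimately show "size (M' x) = N \<and> set_mset (M' x) \<subseteq> X" by blast
  qed
  have p2: "\<forall>y\<in>X. (\<Sum>x\<in>X. count (M' x) y) = N"
  proof
    fix y assume y: "y \<in> X"
    have one: "(\<Sum>x\<in>X. (if g x = y then 1 else 0::nat)) = 1"
    proof -
      obtain x0 where x0: "x0 \<in> X" "g x0 = y" using gbij y unfolding bij_betw_def by (metis imageE)
      have "X \<inter> {x. g x = y} = {x0}"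
      proof
        show "X \<inter> {x. g x = y} \<subseteq> {x0}"
        proof
          fix x assume "x \<in> X \<inter> {x. g x = y}"
          then have "x \<in> X" "g x = g x0" using x0 by auto
          then show "x \<in> {x0}" using inj_onD[OF g(1)] x0(1) by blast
        qed
      qed (use x0 in blast)
      then show ?thesis using assms(1) by (simp add: sum.If_cases)
    qed
    have "(\<Sum>x\<in>X. count (M' x) y) + (\<Sum>x\<in>X. (if g x = y then 1 else 0::nat)) = (\<Sum>x\<in>X. count (M x) y)"
      by (simp only: sum.distrib[symmetric]) (rule sum.cong[OF refl], erule cnt)
    then show "(\<Sum>x\<in>X. count (M' x) y) = N" using one Suc.prems(2) y by simp
  qed
  obtain L' where L': "\<forall>x\<in>X. mset (L' x) = M' x" "\<forall>k<N. bij_betw (\<lambda>x. L' x ! k) X X"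
    using Suc.IH[OF p1 p2] by blast
  define L where "L x = g x # L' x" for x
  have "\<forall>x\<in>X. mset (L x) = M x" using L' g(2) unfolding L_def M'_def by simp
  moreover have "\<forall>k<Suc N. bij_betw (\<lambda>x. L x ! k) X X"
  proof (intro allI impI)
    fix k assume k: "k < Suc N"
    show "bij_betw (\<lambda>x. L x ! k) X X"
    proof (cases k)
      case 0 then show ?thesis using gbij by (simp add: L_def)
    next
      case (Suc j) then show ?thesis using L'(2) k by (simp add: L_def)
    qed
  qed
  ultimately show ?case by blast
qed

lemma perm_eq_iff:
  assumes p: "p permutes {..<N}" and len: "length xs = N"
  shows "(map (\<lambda>i. ys ! \<sigma> (p i)) [0..<N] = permute_list p xs) \<longleftrightarrow> (map (\<lambda>i. ys ! \<sigma> i) [0..<N] = xs)"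
proof
  assume h: "map (\<lambda>i. ys ! \<sigma> (p i)) [0..<N] = permute_list p xs"
  show "map (\<lambda>i. ys ! \<sigma> i) [0..<N] = xs"
  proof (rule nth_equalityI)
    show "length (map (\<lambda>i. ys ! \<sigma> i) [0..<N]) = length xs" using len by simp
  next
    fix j assume j: "j < length (map (\<lambda>i. ys ! \<sigma> i) [0..<N])"
    then have jN: "j < N" by simp
    define i where "i = inv p j"
    have pi: "p i = j" unfolding i_def using p by (simp add: permutes_inverses(1))
    have iN: "i < N" unfolding i_def using permutes_in_image[OF permutes_inv[OF p]] jN by simp
    have "map (\<lambda>i. ys ! \<sigma> (p i)) [0..<N] ! i = permute_list p xs ! i" using h by simp
    then have "ys ! \<sigma> j = xs ! j" using iN pi p len by (simp add: permute_list_nth)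
    then show "map (\<lambda>i. ys ! \<sigma> i) [0..<N] ! j = xs ! j" using jN by simp
  qed
next
  assume h: "map (\<lambda>i. ys ! \<sigma> i) [0..<N] = xs"
  show "map (\<lambda>i. ys ! \<sigma> (p i)) [0..<N] = permute_list p xs"
  proof (rule nth_equalityI)
    show "length (map (\<lambda>i. ys ! \<sigma> (p i)) [0..<N]) = length (permute_list p xs)" using len by simp
  next
    fix i assume i: "i < length (map (\<lambda>i. ys ! \<sigma> (p i)) [0..<N])"
    then have iN: "i < N" by simp
    have piN: "p i < N" using permutes_in_image[OF p] iN by simp
    have "xs ! p i = ys ! \<sigma> (p i)" using h piN by (metis add_0 diff_zero nth_map_upt)
    then show "map (\<lambda>i. ys ! \<sigma> (p i)) [0..<N] ! i = permute_list p xs ! i"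
      using iN p len by (simp add: permute_list_nth)
  qed
qed

lemma symm_tdirac_perm:
  assumes p: "p permutes {..<N}" and len: "length xs = N"
  shows "symm N (tdirac (permute_list p xs)) = symm N (tdirac xs)"
proof (rule ext)
  fix ys :: "'a list"
  have "(\<Sum>\<sigma>\<in>{\<sigma>. \<sigma> permutes {..<N}}. tdirac (permute_list p xs) (map (\<lambda>i. ys ! \<sigma> i) [0..<N]))
      = (\<Sum>\<sigma>\<in>{\<sigma>. \<sigma> permutes {..<N}}. tdirac (permute_list p xs) (map (\<lambda>i. ys ! (\<sigma> \<circ> p) i) [0..<N]))"
    by (rule sum_permutations_compose_right[OF p])
  also have "\<dots> = (\<Sum>\<sigma>\<in>{\<sigma>. \<sigma> permutes {..<N}}. tdirac xs (map (\<lambda>i. ys ! \<sigma> i) [0..<N]))"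
    by (rule sum.cong[OF refl]) (simp add: tdirac_def perm_eq_iff[OF p len])
  finally show "symm N (tdirac (permute_list p xs)) ys = symm N (tdirac xs) ys"
    unfolding symm_def by simp
qed

lemma symm_tdirac_mset:
  assumes "mset xs = mset xs'" "length xs = N"
  shows "symm N (tdirac xs') = symm N (tdirac xs)"
proof -
  obtain p where p: "p permutes {..<length xs}" "permute_list p xs = xs'"
    using mset_eq_permutation[OF assms(1)[symmetric]] by blast
  show ?thesis using symm_tdirac_perm[of p N xs] p assms(2) by simp
qed

lemma monge_eq_sae: "monge_state X N T = sae_equal_weights X N T"
proof (rule ext)
  fix ys
  show "monge_state X N T ys = sae_equal_weights X N T ys"
    unfolding monge_state_def sae_equal_weights_def symm_def
    by (simp add: sum.swap[of _ X] sum_distrib_left sum_divide_distrib) (simp add: mult.commute)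
qed


lemma bij_count:
  assumes "bij_betw f X X" "finite X"
  shows "(\<Sum>x\<in>X. if f x = y then 1 else 0 :: real) = (if y \<in> X then 1 else 0)"
proof (cases "y \<in> X")
  case True
  then obtain x0 where x0: "x0 \<in> X" "f x0 = y" using assms(1) by (metis bij_betw_imp_surj_on imageE)
  have "X \<inter> {x. f x = y} = {x0}" using x0 assms(1) unfolding bij_betw_def inj_on_def by auto
  then show ?thesis using True assms(2) by (simp add: sum.If_cases)
next
  case False
  have "\<forall>x\<in>X. f x \<noteq> y" using False assms(1) bij_betw_apply by metis
  then show ?thesis using False by simp
qed

lemma cnt_tup: "real (count (mset (tup N T x)) y) = (\<Sum>k<N. if T k x = y then 1 else 0)"
  by (induction N) (auto simp: tup_def)

theorem theorem6p1:
  fixes X :: "'a set" and N :: nat and \<gamma> :: "'a list \<Rightarrow> real"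
  assumes "finite X" and "X \<noteq> {}" and "N \<ge> 2" and "prob_on X N \<gamma>"
  shows "(\<exists>T. (\<forall>k<N. bij_betw (T k) X X) \<and> \<gamma> = monge_state X N T)
     \<longleftrightarrow> (\<exists>T. (\<forall>k<N. \<forall>x\<in>X. T k x \<in> X)
              \<and> (\<forall>y. (\<Sum>x\<in>X. (1 / real (card X)) * site_marg N T x y) = unif X y)
              \<and> \<gamma> = sae_equal_weights X N T)"
proof
  have nX: "real (card X) > 0" using assms(1,2) by (simp add: card_gt_0_iff)
  have nN: "real N > 0" using assms(3) by simp
  assume "\<exists>T. (\<forall>k<N. bij_betw (T k) X X) \<and> \<gamma> = monge_state X N T"
  then obtain T where T: "\<forall>k<N. bij_betw (T k) X X" "\<gamma> = monge_state X N T" by blast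
  have m: "(\<Sum>x\<in>X. (1 / real (card X)) * site_marg N T x y) = unif X y" for y
  proof -
    have "(\<Sum>x\<in>X. (1 / real (card X)) * site_marg N T x y)
        = (1 / real (card X)) / real N * (\<Sum>x\<in>X. \<Sum>k<N. if T k x = y then 1 else 0)"
      unfolding site_marg_def by (simp add: sum_distrib_left sum_divide_distrib)
    also have "\<dots> = (1 / real (card X)) / real N * (\<Sum>k<N. \<Sum>x\<in>X. if T k x = y then 1 else 0)"
      by (rule arg_cong[where f="\<lambda>z. (1 / real (card X)) / real N * z"], rule sum.swap)
    also have "\<dots> = (1 / real (card X)) / real N * (\<Sum>k<N. if y \<in> X then 1 else 0)"
      by (rule arg_cong[where f="\<lambda>z. (1 / real (card X)) / real N * z"], rule sum.cong[OF refl],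
          rule bij_count[OF _ assms(1)]) (use T(1) in auto)
    also have "\<dots> = unif X y" using nN by (cases "y \<in> X") (simp_all add: unif_def)
    finally show ?thesis .
  qed
  show "\<exists>T. (\<forall>k<N. \<forall>x\<in>X. T k x \<in> X)
              \<and> (\<forall>y. (\<Sum>x\<in>X. (1 / real (card X)) * site_marg N T x y) = unif X y)
              \<and> \<gamma> = sae_equal_weights X N T"
  proof (intro exI conjI)
    show "\<forall>k<N. \<forall>x\<in>X. T k x \<in> X" using T(1) by (meson bij_betw_apply)
    show "\<forall>y. (\<Sum>x\<in>X. (1 / real (card X)) * site_marg N T x y) = unif X y" using m by blast
    show "\<gamma> = sae_equal_weights X N T" using T(2) by (simp add: monge_eq_sae)
  qed
next
  have nX: "real (card X) > 0" using assms(1,2) by (simp add: card_gt_0_iff)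
  have nN: "real N > 0" using assms(3) by simp
  assume "\<exists>T. (\<forall>k<N. \<forall>x\<in>X. T k x \<in> X)
              \<and> (\<forall>y. (\<Sum>x\<in>X. (1 / real (card X)) * site_marg N T x y) = unif X y)
              \<and> \<gamma> = sae_equal_weights X N T"
  then obtain T where T: "\<forall>k<N. \<forall>x\<in>X. T k x \<in> X"
    "\<forall>y. (\<Sum>x\<in>X. (1 / real (card X)) * site_marg N T x y) = unif X y"
    "\<gamma> = sae_equal_weights X N T" by blast
  define M where "M x = mset (tup N T x)" for x
  have p1: "\<forall>x\<in>X. size (M x) = N \<and> set_mset (M x) \<subseteq> X"
    using T(1) unfolding M_def tup_def by auto
  have p2: "\<forall>y\<in>X. (\<Sum>x\<in>X. count (M x) y) = N"
  proof
    fix y assume y: "y \<in> X"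
    define S where "S x = (\<Sum>k<N. if T k x = y then 1 else 0 :: real)" for x
    have "(\<Sum>x\<in>X. (1 / real (card X)) * site_marg N T x y) = (\<Sum>x\<in>X. S x) / (real (card X) * real N)"
      unfolding site_marg_def S_def by (simp add: sum_distrib_left sum_divide_distrib)
    then have "(\<Sum>x\<in>X. S x) / (real (card X) * real N) = 1 / real (card X)"
      using T(2) y unfolding unif_def by simp
    then have "(\<Sum>x\<in>X. S x) = real N" using nX nN by (simp add: field_simps)
    moreover have "real (\<Sum>x\<in>X. count (M x) y) = (\<Sum>x\<in>X. S x)"
      unfolding M_def S_def by (simp add: cnt_tup)
    ultimately show "(\<Sum>x\<in>X. count (M x) y) = N" by linarith
  qed
  obtain L where L: "\<forall>x\<in>X. mset (L x) = M x" "\<forall>k<N. bij_betw (\<lambda>x. L x ! k) X X"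
    using decomp[OF assms(1) p1 p2] by blast
  define T' where "T' k x = L x ! k" for k x
  have "sae_equal_weights X N T' = sae_equal_weights X N T"
    unfolding sae_equal_weights_def
  proof (rule ext, rule sum.cong[OF refl])
    fix ys x assume x: "x \<in> X"
    have lenL: "length (L x) = N" using L(1) p1 x by (metis size_mset)
    have "tup N T' x = L x" unfolding tup_def T'_def using map_nth[of "L x"] lenL by simp
    moreover have "symm N (tdirac (L x)) = symm N (tdirac (tup N T x))"
      by (rule symm_tdirac_mset) (use L(1) x in \<open>auto simp: M_def tup_def\<close>)
    ultimately show "1 / real (card X) * symm N (tdirac (tup N T' x)) ys =
          1 / real (card X) * symm N (tdirac (tup N T x)) ys" by simp
  qed
  then have "\<gamma> = monge_state X N T'" using T(3) by (simp add: monge_eq_sae)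
  moreover have "\<forall>k<N. bij_betw (T' k) X X" using L(2) unfolding T'_def by simp
  ultimately show "\<exists>T. (\<forall>k<N. bij_betw (T k) X X) \<and> \<gamma> = monge_state X N T" by blast
qed

end
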